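(* Let $\{x_k\}$ be generated by the Subgradient-InexP method with Polyak's stepsize rule, under the standing assumptions, and assume $\{x_k\}$ converges to a point $x_*\in\Omega^*$. Let $c>0$ satisfy $c\ge\|s_k\|$ for all $k=0,1,\dots$. Then for every $N\in\mathbb{N}$, $$\min\{f(x_k)-f^*:\ k=0,1,\dots,N\}\le\frac{c}{\sqrt{\underline\beta(N+1)}}\,\|x_0-x_*\|.$$
   Context: Problem: minimize a convex $f:\mathbb{R}^n\to\mathbb{R}$ over a nonempty closed convex $C\subset\mathbb{R}^n$; $f^*:=\inf_{x\in C}f(x)$, $\Omega^*$ the set of minimizers. For $\epsilon\ge0$, $\partial_\epsilon f(x):=\{s: f(y)\ge f(x)+\langle s,y-x\rangle-\epsilon\ \forall y\}$. Relative error tolerance function: any $\varphi_{\gamma,\theta,\lambda}:(\mathbb{R}^n)^3\to[0,\infty)$ with $\varphi_{\gamma,\theta,\lambda}(u,v,w)\le\gamma\|v-u\|^2+\theta\|w-v\|^2+\lambda\|w-u\|^2$; for $u\in C$, $\mathcal{P}_C(\varphi_{\gamma,\theta,\lambda},u,v):=\{w\in C:\langle v-w,z-w\rangle\le\varphi_{\gamma,\theta,\lambda}(u,v,w)\ \forall z\in C\}$. Subgradient-InexP method: $x_0\in C$; at iteration $k$, if $0\in\partial f(x_k)$ stop; otherwise choose nonzero $s_k\in\partial_{\epsilon_k}f(x_k)$, stepsize $t_k>0$, and $x_{k+1}\in\mathcal{P}_C(\varphi_{\gamma_k,\theta_k,\lambda_k},x_k,x_k-t_ks_k)$. Standing assumptions: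 $\gamma_k\in[0,\bar\gamma)$, $\theta_k\in[0,\bar\theta)$, $\lambda_k\in[0,\bar\lambda)$ with $\bar\gamma\ge0$, $\bar\theta,\bar\lambda\in[0,1/2)$; the sequence is infinite. Let $\nu:=\frac{1+2\bar\gamma}{1-2\bar\lambda}$. Polyak's stepsize rule: $\Omega^*\neq\varnothing$, $f^*>-\infty$ known; $\mu\ge0$, $\underline\beta>0$, $\bar\beta>0$; $\{\epsilon_k\}$ nonincreasing, $0<\underline\beta\le\beta_k\le\bar\beta<\frac{1}{2\mu+\nu}$ and $0<\epsilon_k\le\mu\beta_k[f(x_k)-f^*]$ for all $k$; $t_k:=\beta_k\frac{f(x_k)-f^*}{\|s_k\|^2}$. *)

theory Defs
  imports "HOL-Analysis.Analysis"
begin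

definition eps_subdiff :: "('a::real_inner \<Rightarrow> real) \<Rightarrow> real \<Rightarrow> 'a \<Rightarrow> 'a set" where
  "eps_subdiff f eps x = {s. \<forall>y. f y \<ge> f x + inner s (y - x) - eps}"

definition rel_err_tol :: "('a::real_normed_vector \<Rightarrow> 'a \<Rightarrow> 'a \<Rightarrow> real) \<Rightarrow> real \<Rightarrow> real \<Rightarrow> real \<Rightarrow> bool" where
  "rel_err_tol phi gam th lam \<longleftrightarrow>
     (\<forall>u v w. 0 \<le> phi u v w \<and>
        phi u v w \<le> gam * (norm (v - u))\<^sup>2 + th * (norm (w - v))\<^sup>2 + lam * (norm (w - u))\<^sup>2)"

definition inexact_proj :: "'a::real_inner set \<Rightarrow> ('a \<Rightarrow> 'a \<Rightarrow> 'a \<Rightarrow> real) \<Rightarrow> 'a \<Rightarrow> 'a \<Rightarrow> 'a set" where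
  "inexact_proj C phi u v = {w \<in> C. \<forall>z\<in>C. inner (v - w) (z - w) \<le> phi u v w}"

definition minimizers :: "('a \<Rightarrow> real) \<Rightarrow> 'a set \<Rightarrow> 'a set" where
  "minimizers f C = {x \<in> C. \<forall>y\<in>C. f x \<le> f y}"

end

theory Submission
  imports Defs
begin



lemma norm_id:
  fixes v w z :: "'a::real_inner"
  shows "(norm (w-z))^2 = (norm (v-z))^2 - (norm (v-w))^2 + 2*inner (v-w) (z-w)"
  unfolding power2_norm_eq_inner
  by (simp add: inner_diff_left inner_diff_right inner_commute algebra_simps)

lemma proj_ineq:
  fixes u v w z :: "'a::real_inner"
  assumes "inner (v - w) (z - w) \<le> g*(norm(v-u))^2 + th*(norm(w-v))^2 + l*(norm(w-u))^2"
    "2*th \<le> 1"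
  shows "(norm (w-z))^2 \<le> (norm (v-z))^2 + 2*g*(norm(v-u))^2 + 2*l*(norm(w-u))^2"
proof -
  have e: "norm (w-v) = norm (v-w)" by (simp add: norm_minus_commute)
  have "th*(norm(v-w))^2 \<le> (1/2)*(norm(v-w))^2"
    using assms(2) by (intro mult_right_mono) auto
  then show ?thesis using norm_id[of w z v] assms(1) unfolding e by linarith
qed

lemma vz_id:
  fixes u s z :: "'a::real_inner"
  shows "(norm (u - t *\<^sub>R s - z))^2 = (norm (u-z))^2 - 2*t*inner s (u-z) + t^2*(norm s)^2"
  unfolding power2_norm_eq_inner
  by (simp add: inner_diff_left inner_diff_right inner_commute algebra_simps power2_eq_square)



lemma arith_step:
  fixes W V U P Q I S t g l gb lb eps mu beta d blow bup c :: real
  assumes A: "W \<le> V + 2*g*P + 2*l*Q"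
    and B: "Q \<le> P + 2*g*P + 2*l*Q"
    and V: "V = U - 2*t*I + t^2*S"
    and P: "P = t^2 * S"
    and I: "I \<ge> d - eps"
    and g: "0 \<le> g" "g < gb" and l: "0 \<le> l" "l < lb" "lb < 1/2"
    and eps: "eps \<le> mu*beta*d" and mu: "0 \<le> mu" and d: "0 \<le> d"
    and t: "t = beta * d / S" and S: "0 < S" "S \<le> c^2"
    and beta: "blow \<le> beta" "beta \<le> bup" and blow: "0 < blow"
    and bup: "bup < 1 / (2*mu + (1+2*gb)/(1-2*lb))"
  shows "W \<le> U - blow * d^2 / c^2"
proof -
  define nu where "nu = (1+2*gb)/(1-2*lb)"
  have nupos: "nu > 0" unfolding nu_def using g l by auto
  have tnn: "t \<ge> 0" using t S beta blow d by auto
  have Pnn: "P \<ge> 0" using P S by auto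
  have Q1: "(1-2*l)*Q \<le> (1+2*g)*P" using B by (simp add: algebra_simps)
  have "Q \<le> (1+2*g)/(1-2*l)*P" using Q1 l by (simp add: field_simps)
  hence "2*l*Q \<le> 2*l*((1+2*g)/(1-2*l)*P)" using l by (intro mult_left_mono) auto
  hence "P + 2*g*P + 2*l*Q \<le> (1+2*g)/(1-2*l)*P"
    using l by (simp add: field_simps)
  moreover have "(1+2*g)/(1-2*l) \<le> nu" unfolding nu_def using g l
    by (intro frac_le) auto
  ultimately have C: "P + 2*g*P + 2*l*Q \<le> nu * P" using Pnn
    by (meson mult_right_mono order_trans)
  have W1: "W \<le> U - 2*t*I + nu*P" using A V C P by linarith
  have "t*I \<ge> t*(d-eps)" using I tnn by (intro mult_left_mono) auto
  hence W2: "W \<le> U - 2*t*(d - eps) + nu*P" using W1 by linarith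
  have tS: "t*S = beta*d" using t S by simp
  have P2: "P = t*(beta*d)" using P tS by (simp add: power2_eq_square algebra_simps)
  have "t*eps \<le> t*(mu*beta*d)" using eps tnn by (intro mult_left_mono) auto
  hence W3: "W \<le> U - t*d*(2 - 2*mu*beta - nu*beta)" using W2 P2 by (simp add: algebra_simps)
  have den: "2*mu+nu > 0" using mu nupos by auto
  have "beta*(2*mu+nu) < 1" using bup beta den unfolding nu_def[symmetric]
    by (smt (verit, ccfv_SIG) less_divide_eq mult.commute)
  hence "2 - 2*mu*beta - nu*beta \<ge> 1" by (simp add: algebra_simps)
  hence "t*d*(2 - 2*mu*beta - nu*beta) \<ge> t*d" using tnn d
    by (metis mult_left_mono mult_nonneg_nonneg mult.right_neutral)
  hence W4: "W \<le> U - t*d" using W3 by linarith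
  have td: "t*d = beta*d^2/S" using t by (simp add: power2_eq_square)
  have "blow*d^2/c^2 \<le> beta*d^2/c^2" using beta by (intro divide_right_mono mult_right_mono) auto
  also have "\<dots> \<le> beta*d^2/S" using S beta blow by (intro divide_left_mono) (auto, smt (verit) mult_pos_pos)
  finally show ?thesis using W4 td by linarith
qed
theorem mainTheorem9:
  fixes f :: "'a::euclidean_space \<Rightarrow> real"
    and C :: "'a set"
    and x s :: "nat \<Rightarrow> 'a"
    and t eps beta gam th lam :: "nat \<Rightarrow> real"
    and phi :: "nat \<Rightarrow> 'a \<Rightarrow> 'a \<Rightarrow> 'a \<Rightarrow> real"
    and gbar thbar lbar mu blow bup fstar c :: real
    and xstar :: 'a
  assumes f_convex: "convex_on UNIV f"
    and C_closed: "closed C" and C_convex: "convex C" and C_ne: "C \<noteq> {}"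
    \<comment> \<open>Subgradient-InexP method, infinite sequence\<close>
    and x0: "x 0 \<in> C"
    and no_stop: "\<And>k. 0 \<notin> eps_subdiff f 0 (x k)"
    and s_sub: "\<And>k. s k \<in> eps_subdiff f (eps k) (x k)"
    and s_nz: "\<And>k. s k \<noteq> 0"
    and t_pos: "\<And>k. t k > 0"
    and x_step: "\<And>k. x (Suc k) \<in> inexact_proj C (phi k) (x k) (x k - t k *\<^sub>R s k)"
    and phi_tol: "\<And>k. rel_err_tol (phi k) (gam k) (th k) (lam k)"
    \<comment> \<open>standing assumptions on the tolerance parameters\<close>
    and gam_bd: "\<And>k. 0 \<le> gam k \<and> gam k < gbar"
    and th_bd: "\<And>k. 0 \<le> th k \<and> th k < thbar"
    and lam_bd: "\<And>k. 0 \<le> lam k \<and> lam k < lbar"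
    and gbar_nn: "0 \<le> gbar"
    and thbar_bd: "0 \<le> thbar \<and> thbar < 1/2"
    and lbar_bd: "0 \<le> lbar \<and> lbar < 1/2"
    \<comment> \<open>Polyak's stepsize rule\<close>
    and Omega_ne: "minimizers f C \<noteq> {}"
    and fstar_def: "fstar = (INF y\<in>C. f y)"
    and mu_nn: "0 \<le> mu"
    and blow_pos: "0 < blow" and bup_pos: "0 < bup"
    and eps_noninc: "\<And>k. eps (Suc k) \<le> eps k"
    and beta_bd: "\<And>k. blow \<le> beta k \<and> beta k \<le> bup"
    and bup_lt: "bup < 1 / (2 * mu + (1 + 2 * gbar) / (1 - 2 * lbar))"
    and eps_bd: "\<And>k. 0 < eps k \<and> eps k \<le> mu * beta k * (f (x k) - fstar)"
    and t_def: "\<And>k. t k = beta k * (f (x k) - fstar) / (norm (s k))\<^sup>2"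
    \<comment> \<open>convergence to a solution, bounded subgradients\<close>
    and xstar_sol: "xstar \<in> minimizers f C"
    and x_conv: "x \<longlonglongrightarrow> xstar"
    and c_pos: "0 < c"
    and s_bd: "\<And>k. norm (s k) \<le> c"
  shows "\<forall>N::nat. Min ((\<lambda>k. f (x k) - fstar) ` {0..N})
           \<le> c / sqrt (blow * (real N + 1)) * norm (x 0 - xstar)"
  proof -
  have xC: "x k \<in> C" for k
    using x0 x_step[of "k-1"] by (cases k) (auto simp: inexact_proj_def)
  have zC: "xstar \<in> C" and zmin: "\<And>y. y \<in> C \<Longrightarrow> f xstar \<le> f y"
    using xstar_sol by (auto simp: minimizers_def)
  have fz: "f xstar = fstar" unfolding fstar_def
    by (rule cInf_eq_minimum[symmetric]) (use zC zmin in auto)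
  define d where "d k = f (x k) - fstar" for k
  have dnn: "d k \<ge> 0" for k using zmin[OF xC[of k]] fz d_def by auto
  have step: "(norm (x (Suc k) - xstar))^2 \<le> (norm (x k - xstar))^2 - blow * (d k)^2 / c^2" for k
  proof -
    define u where "u = x k"
    define v where "v = x k - t k *\<^sub>R s k"
    define w where "w = x (Suc k)"
    have wp: "\<forall>z\<in>C. inner (v-w) (z-w) \<le> phi k u v w"
      using x_step[of k] unfolding inexact_proj_def u_def v_def w_def by auto
    have ph: "phi k u v w \<le> gam k * (norm (v - u))\<^sup>2 + th k * (norm (w - v))\<^sup>2 + lam k * (norm (w - u))\<^sup>2"
      using phi_tol[of k] unfolding rel_err_tol_def by blast
    have th2: "2 * th k \<le> 1" using th_bd[of k] thbar_bd by auto
    have A: "(norm (w-xstar))^2 \<le> (norm (v-xstar))^2 + 2*gam k*(norm(v-u))^2 + 2*lam k*(norm(w-u))^2"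
      by (rule proj_ineq[OF _ th2]) (use wp ph zC in force)
    have B: "(norm (w-u))^2 \<le> (norm (v-u))^2 + 2*gam k*(norm(v-u))^2 + 2*lam k*(norm(w-u))^2"
      by (rule proj_ineq[OF _ th2]) (use wp ph xC[of k] u_def in force)
    have V: "(norm (v-xstar))^2 = (norm (u-xstar))^2 - 2*t k*inner (s k) (u-xstar) + (t k)^2*(norm (s k))^2"
      unfolding v_def u_def by (rule vz_id)
    have P: "(norm (v-u))^2 = (t k)^2 * (norm (s k))^2"
      unfolding v_def u_def using t_pos[of k] by (simp add: power_mult_distrib)
    have "f xstar \<ge> f u + inner (s k) (xstar - u) - eps k"
      using s_sub[of k] unfolding eps_subdiff_def u_def by blast
    moreover have "inner (s k) (xstar - u) = - inner (s k) (u - xstar)"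
      by (simp add: inner_diff_right)
    ultimately have I: "inner (s k) (u - xstar) \<ge> d k - eps k"
      using fz unfolding d_def u_def by linarith
    have S: "0 < (norm (s k))^2" "(norm (s k))^2 \<le> c^2"
      using s_nz[of k] s_bd[of k] by (auto intro: power_mono)
    show ?thesis unfolding w_def[symmetric] u_def[symmetric]
      apply (rule arith_step[OF A B V P I])
      using gam_bd[of k] lam_bd[of k] lbar_bd eps_bd[of k] mu_nn dnn[of k] t_def[of k]
        S beta_bd[of k] blow_pos bup_lt
      by (auto simp: d_def)
  qed
  have tele: "(norm (x (Suc N) - xstar))^2 \<le> (norm (x 0 - xstar))^2 - blow / c^2 * (\<Sum>k\<in>{0..N}. (d k)^2)" for N
  proof (induction N)
    case 0 then show ?case using step[of 0] by simp
  next
    case (Suc N)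
    have "blow / c^2 * (\<Sum>k\<in>{0..Suc N}. (d k)^2) = blow / c^2 * (\<Sum>k\<in>{0..N}. (d k)^2) + blow * (d (Suc N))^2 / c^2"
      by (simp add: distrib_left)
    then show ?case using Suc step[of "Suc N"] by linarith
  qed
  show ?thesis
  proof
    fix N :: nat
    define m where "m = Min ((\<lambda>k. f (x k) - fstar) ` {0..N})"
    have mem: "m \<in> (\<lambda>k. f (x k) - fstar) ` {0..N}" unfolding m_def by (intro Min_in) auto
    have mle: "m \<le> d k" if "k \<in> {0..N}" for k unfolding m_def d_def using that by (intro Min_le) auto
    have mnn: "m \<ge> 0" using mem dnn d_def by auto
    have "(\<Sum>k\<in>{0..N}. m^2) \<le> (\<Sum>k\<in>{0..N}. (d k)^2)"
      using mle mnn by (intro sum_mono power_mono) auto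
    hence sm: "(real N + 1) * m^2 \<le> (\<Sum>k\<in>{0..N}. (d k)^2)" by (simp add: add.commute)
    have "blow / c^2 * (\<Sum>k\<in>{0..N}. (d k)^2) \<le> (norm (x 0 - xstar))^2"
      using tele[of N] by (smt (verit) zero_le_power2)
    hence "blow / c^2 * ((real N + 1) * m^2) \<le> (norm (x 0 - xstar))^2"
      using sm blow_pos c_pos
      by (smt (verit, best) divide_nonneg_pos mult_left_mono zero_less_power)
    hence "(blow * (real N + 1)) * m^2 \<le> c^2 * (norm (x 0 - xstar))^2"
      using blow_pos c_pos by (simp add: field_simps)
    moreover have "blow * (real N + 1) > 0" using blow_pos by simp
    ultimately have "m^2 \<le> c^2 * (norm (x 0 - xstar))^2 / (blow * (real N + 1))"
      by (simp add: pos_le_divide_eq mult.commute)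
    hence "m \<le> sqrt (c^2 * (norm (x 0 - xstar))^2 / (blow * (real N + 1)))"
      using real_le_rsqrt by blast
    also have "\<dots> = c / sqrt (blow * (real N + 1)) * norm (x 0 - xstar)"
      using c_pos by (simp add: real_sqrt_divide real_sqrt_mult)
    finally show "Min ((\<lambda>k. f (x k) - fstar) ` {0..N}) \<le> c / sqrt (blow * (real N + 1)) * norm (x 0 - xstar)"
      unfolding m_def .
  qed
qed

end
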